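(* In the transactional panorama model described in the context, if every read transaction is answered so as to maintain consistency-committed ($C_c$), i.e., each read transaction returns the states of its views from the most recently committed version of the view graph, then the resulting sequence of read transactions also maintains monotonicity and visibility.
   Context: A view graph is a directed acyclic graph on a fixed set $N$ of nodes (source data and views); there is an edge $n_j \to n_i$ if view $n_i$ takes $n_j$ as input, and the dependents of a node are the nodes reachable from it. The view graph is multi-versioned. Write transactions $w^{t_1},\dots,w^{t_n}$ (timestamps $t_1<\dots<t_n$, starting from an initial version $G^{t_0}$) each modify some source nodes and must recompute their dependents; they are processed one at a time in timestamp order. Write transaction $w^{t_i}$ creates version $G^{t_i}=(E,N,V^{t_i})$, where for each node $n_k$ the set $V^{t_i}$ contains: the result $v_k^{t_i}$ if $w^{t_i}$ updates $n_k$ and has already computed it; a placeholder $UC_k^{t_i}$ ("under computation") if $w^{t_i}$ updates $n_k$ but has not yet computed it; or the result of $n_k$ from the previous version if $w^{t_i}$ does not update $n_k$. A version is committed once all its new results have been computed (and its commit is recorded); the most recently committed version contains no UCs. The timestamp of a returned state is the timestamp of the version it belongs to. Read transactions $r^{s_1},\dots,r^{s_m}$ ($s_1<\dots<s_m$) each read the set of views in the user's current viewport (a subset of $N$, which may change between reads) and return immediately, without waiting, a set $H^{s_i}$ containing one state (a view result or a UC) per view read. Monotonicity: for any view $n_k$ read by two transactions $r^{s_i}, r^{s_j}$ with $s_i<s_j$, returning states with timestamps $t_p$ and $t_q$, we have $t_p \le t_q$. Visibility: no $H^{s_i}$ contains a UC. Consistency: for each $r^{s_i}$ there is a version $G^{t_j}=(E,N,V^{t_j})$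 with $t_j\le s_i$ and $H^{s_i}\subseteq V^{t_j}$. *)

theory Defs
  imports Main
begin

text \<open>State of a node in a version: a view result, or the placeholder UC
  ("under computation").\<close>
datatype 'v state = Res 'v | UC

definition updated :: "('n \<times> 'n) set \<Rightarrow> 'n set \<Rightarrow> 'n set" where
  "updated E S = {k. \<exists>j\<in>S. (j, k) \<in> E\<^sup>*}"

text \<open>State of node k in version G^{t_i} at (real) time tau.
  val i k is the result v_k^{t_i} computed by w^{t_i} (val 0 = initial version),
  ctime i k is the time at which w^{t_i} finishes computing node k,
  upd i is the set of nodes updated by w^{t_i}.\<close>
fun ver_state ::
  "(nat \<Rightarrow> 'n set) \<Rightarrow> (nat \<Rightarrow> 'n \<Rightarrow> 'v) \<Rightarrow> (nat \<Rightarrow> 'n \<Rightarrow> 'ts::linorder)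
     \<Rightarrow> nat \<Rightarrow> 'ts \<Rightarrow> 'n \<Rightarrow> 'v state" where
  "ver_state upd val ctime 0 tau k = Res (val 0 k)"
| "ver_state upd val ctime (Suc i) tau k =
     (if k \<in> upd (Suc i)
      then (if ctime (Suc i) k \<le> tau then Res (val (Suc i) k) else UC)
      else ver_state upd val ctime i tau k)"

text \<open>Index of the most recently committed version at time s
  (commit i = commit time of version i, versions 0..n).\<close>
definition most_recent_committed :: "nat \<Rightarrow> (nat \<Rightarrow> 'ts::linorder) \<Rightarrow> 'ts \<Rightarrow> nat" where
  "most_recent_committed n commit s = (GREATEST j. j \<le> n \<and> commit j \<le> s)"

text \<open>Read results H i (i = 1..m): sets of triples (node, timestamp of the state, state).\<close>

definition maintains_Cc ::
  "nat \<Rightarrow> (nat \<Rightarrow> 'ts::linorder) \<Rightarrow> (nat \<Rightarrow> 'ts) \<Rightarrow> (nat \<Rightarrow> 'n set) \<Rightarrow> (nat \<Rightarrow> 'n \<Rightarrow> 'v)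
    \<Rightarrow> (nat \<Rightarrow> 'n \<Rightarrow> 'ts) \<Rightarrow> nat \<Rightarrow> (nat \<Rightarrow> 'ts) \<Rightarrow> (nat \<Rightarrow> 'n set)
    \<Rightarrow> (nat \<Rightarrow> ('n \<times> 'ts \<times> 'v state) set) \<Rightarrow> bool" where
  "maintains_Cc n t commit upd val ctime m s vp H \<longleftrightarrow>
     (\<forall>i\<in>{1..m}. H i =
        {(k, t (most_recent_committed n commit (s i)),
             ver_state upd val ctime (most_recent_committed n commit (s i)) (s i) k) | k. k \<in> vp i})"

definition monotonicity :: "nat \<Rightarrow> (nat \<Rightarrow> ('n \<times> 'ts::linorder \<times> 'v state) set) \<Rightarrow> bool" where
  "monotonicity m H \<longleftrightarrow>
     (\<forall>i\<in>{1..m}. \<forall>j\<in>{1..m}. i < j \<longrightarrow>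
        (\<forall>k tp sp tq sq. (k, tp, sp) \<in> H i \<and> (k, tq, sq) \<in> H j \<longrightarrow> tp \<le> tq))"

definition visibility :: "nat \<Rightarrow> (nat \<Rightarrow> ('n \<times> 'ts \<times> 'v state) set) \<Rightarrow> bool" where
  "visibility m H \<longleftrightarrow> (\<forall>i\<in>{1..m}. \<forall>k tp sp. (k, tp, sp) \<in> H i \<longrightarrow> sp \<noteq> UC)"

end

theory Submission
  imports Defs
begin


lemma mono_upto:
  fixes f :: "nat \<Rightarrow> 'a::linorder"
  assumes "\<forall>i<n. f i < f (Suc i)" "a \<le> b" "b \<le> n"
  shows "f a \<le> f b"
  using assms(2,3)
proof (induction b)
  case 0 then show ?case by simp
next
  case (Suc b)
  show ?case
  proof (cases "a = Suc b")
    case True then show ?thesis by simp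
  next
    case False
    then have "f a \<le> f b" using Suc by simp
    also have "f b < f (Suc b)" using assms(1) Suc.prems by simp
    finally show ?thesis by simp
  qed
qed

lemma mrc_props:
  assumes "commit 0 \<le> s"
  shows "most_recent_committed n commit s \<le> n \<and> commit (most_recent_committed n commit s) \<le> s"
  unfolding most_recent_committed_def
  by (rule GreatestI_nat[where k=0 and b=n]) (use assms in auto)

lemma mrc_mono:
  assumes "commit 0 \<le> s1" "s1 \<le> s2"
  shows "most_recent_committed n commit s1 \<le> most_recent_committed n commit s2"
proof -
  have "most_recent_committed n commit s1 \<le> n \<and> commit (most_recent_committed n commit s1) \<le> s2"
    using mrc_props[of commit s1 n, OF assms(1)] assms(2) by (meson order_trans)
  then show ?thesis unfolding most_recent_committed_def[of n commit s2]
    by (intro Greatest_le_nat[where b=n]) (auto simp: most_recent_committed_def)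
qed

lemma ver_no_UC:
  assumes "\<forall>i'\<in>{1..i}. \<forall>k\<in>upd i'. ctime i' k \<le> tau"
  shows "ver_state upd val ctime i tau k \<noteq> UC"
  using assms by (induction i) auto

theorem theorem2p4:
  fixes N :: "'n set" and E :: "('n \<times> 'n) set"
    and n :: nat and t :: "nat \<Rightarrow> 'ts::linorder"
    and src upd :: "nat \<Rightarrow> 'n set" and val :: "nat \<Rightarrow> 'n \<Rightarrow> 'v"
    and ctime :: "nat \<Rightarrow> 'n \<Rightarrow> 'ts" and commit :: "nat \<Rightarrow> 'ts"
    and m :: nat and s :: "nat \<Rightarrow> 'ts" and vp :: "nat \<Rightarrow> 'n set"
    and H :: "nat \<Rightarrow> ('n \<times> 'ts \<times> 'v state) set"
  assumes graph: "E \<subseteq> N \<times> N" "acyclic E"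
    and ts_mono: "\<forall>i<n. t i < t (Suc i)"
    and src: "\<forall>i\<in>{1..n}. src i \<subseteq> N"
    and upd: "\<forall>i\<in>{1..n}. upd i = updated E (src i)"
    and commit_init: "commit 0 = t 0"
    and commit_seq: "\<forall>i<n. commit i < commit (Suc i)"
    and commit_computed: "\<forall>i\<in>{1..n}. \<forall>k\<in>upd i. ctime i k \<le> commit i"
    and reads_mono: "\<forall>i\<in>{1..m}. \<forall>j\<in>{1..m}. i < j \<longrightarrow> s i < s j"
    and reads_after_init: "\<forall>i\<in>{1..m}. t 0 \<le> s i"
    and viewport: "\<forall>i\<in>{1..m}. vp i \<subseteq> N"
    and Cc: "maintains_Cc n t commit upd val ctime m s vp H"
  shows "monotonicity m H \<and> visibility m H"
proof -
  let ?J = "\<lambda>x. most_recent_committed n commit x"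
  have mono: "monotonicity m H"
    unfolding monotonicity_def
  proof (intro ballI impI allI)
    fix i j k tp sp tq sq
    assume i: "i \<in> {1..m}" and j: "j \<in> {1..m}" and ij: "i < j"
      and h: "(k, tp, sp) \<in> H i \<and> (k, tq, sq) \<in> H j"
    have c0: "commit 0 \<le> s i" using reads_after_init i commit_init by simp
    have sij: "s i \<le> s j" using reads_mono i j ij by (meson less_imp_le)
    have tp: "tp = t (?J (s i))" using h Cc i unfolding maintains_Cc_def by auto
    have tq: "tq = t (?J (s j))" using h Cc j unfolding maintains_Cc_def by auto
    have "?J (s i) \<le> ?J (s j)" by (rule mrc_mono[of commit "s i" "s j" n, OF c0 sij])
    moreover have "?J (s j) \<le> n" using mrc_props[of commit "s j" n] c0 sij by auto
    ultimately show "tp \<le> tq" unfolding tp tq by (rule mono_upto[OF ts_mono])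
  qed
  have vis: "visibility m H"
    unfolding visibility_def
  proof (intro ballI allI impI)
    fix i k tp sp
    assume i: "i \<in> {1..m}" and h: "(k, tp, sp) \<in> H i"
    have c0: "commit 0 \<le> s i" using reads_after_init i commit_init by simp
    have sp: "sp = ver_state upd val ctime (?J (s i)) (s i) k"
      using h Cc i unfolding maintains_Cc_def by auto
    have P: "?J (s i) \<le> n" "commit (?J (s i)) \<le> s i" using mrc_props[of commit "s i" n, OF c0] by auto
    have "\<forall>i'\<in>{1..?J (s i)}. \<forall>k\<in>upd i'. ctime i' k \<le> s i"
    proof (intro ballI)
      fix i' k assume a: "i' \<in> {1..?J (s i)}" "k \<in> upd i'"
      have "ctime i' k \<le> commit i'" using commit_computed a P by auto
      also have "commit i' \<le> commit (?J (s i))"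
        using a P by (intro mono_upto[OF commit_seq]) auto
      finally show "ctime i' k \<le> s i" using P by simp
    qed
    then show "sp \<noteq> UC" unfolding sp by (rule ver_no_UC)
  qed
  show ?thesis using mono vis by simp
qed

end
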